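(* Let $(\mathcal{M},g)$ be a smooth four-dimensional Lorentzian manifold, let $\sigma$ be a timelike path parameterized by proper time whose tangent vector is a timelike Killing vector field $\vec K$ defined near $\sigma$, and let $X$ be the Fermi surface of $\sigma$ at $\sigma(0)$, equipped with Fermi–Walker space coordinates $x=(x^1,x^2,x^3)$ and the coordinate measure $d\mathbf{x}=dx^1dx^2dx^3$. Let $\Lambda\subset X$ be a Borel set with compact closure (contained in the region where these coordinates are defined and $\vec K$ is timelike). Regard the speed of light $c$ as a parameter, put $y=1/c$, and define $\alpha=\|\vec K\|/c$, where $\|\vec K\|=\sqrt{-g(\vec K,\vec K)}$. Assume that $\alpha$ extends to a smooth function $\alpha(y,x)$ of $(y,x)$, including $y=0$, with $\alpha(0,x)=1$ and $\partial_y\alpha(0,x)=0$, so that $\alpha=1+\tfrac12\alpha''(0)y^2+O(y^3)$, where $\alpha''(0)=\partial_y^2\alpha(0,x)$. Fix $\beta>0$, particle mass $m>0$ and chemical potential $\mu\in\mathbb{R}$, and put $\gamma(x)=\|\vec K\|\beta mc=\alpha\beta m c^2$, $$z=\frac{4\pi(mc)^3}{(2\pi\hbar)^3}e^{\beta(mc^2+\mu)},\qquad z_{\text{Newt}}=\Big(\frac{m}{2\pi\hbar^2\beta}\Big)^{3/2}e^{\beta\mu},$$ $w_c(x)=z\,K_2(\gamma(x))/\gamma(x)$ (with $K_2$ the modified Bessel function of the second kind) and $w_{\text{Newt}}(x)=z_{\text{Newt}}\,e^{-\frac12\beta m\alpha''(0)(x)}$. Then: (a) (zero cosmological constant) For the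 relativistic ideal gas partition function $Z_\Lambda=\sum_{n\ge0}\frac{1}{n!}\big(\int_\Lambda w_c\,d\mathbf{x}\big)^n$ one has $$\lim_{c\to\infty}Z_\Lambda=Z_{\text{Newt}}(\Lambda):=\sum_{n\ge0}\frac{1}{n!}\Big(\int_\Lambda w_{\text{Newt}}\,d\mathbf{x}\Big)^n=\exp\Big[z_{\text{Newt}}\int_\Lambda e^{-\frac12\beta m\alpha''(0)}d\mathbf{x}\Big].$$ (b) For every $A\in\mathcal{B}_\Lambda$ and every configuration $s\in\Gamma_X$, $$\lim_{c\to\infty}\Pi_\Lambda(A,s)=\Pi^{\text{Newt}}_\Lambda(A,s),$$ where for a weight $w\in\{w_c,w_{\text{Newt}}\}$ the corresponding specification is $$\Pi^{w}_\Lambda(A,s)=\frac{\sum_{n\ge0}\frac{1}{n!}\int_{\Lambda^n}1_A\big(\{x_1,\dots,x_n\}\cup(s\cap(X\setminus\Lambda))\big)\prod_{i=1}^n w(x_i)\,d\mathbf{x}_1\cdots d\mathbf{x}_n}{\sum_{n\ge0}\frac{1}{n!}\big(\int_\Lambda w\,d\mathbf{x}\big)^n},$$ $\Pi_\Lambda=\Pi^{w_c}_\Lambda$ and $\Pi^{\text{Newt}}_\Lambda=\Pi^{w_{\text{Newt}}}_\Lambda$ (both sides being independent of $s$).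
   Context: The Fermi surface $X$ of $\sigma$ at $\sigma(0)$ is the set of points $\exp_{\sigma(0)}(v)$ with $v$ orthogonal to $\sigma'(0)$ (within the domain of the exponential map); Fermi–Walker space coordinates assign to $\exp_{\sigma(0)}(\lambda^j e_j)$ the coordinates $x^j=\lambda^j$, where $e_1,e_2,e_3$ is an orthonormal triad orthogonal to $\sigma'(0)$. The measure $d\mathbf{x}=dx^1dx^2dx^3$ is Lebesgue measure in these coordinates. $\Gamma_X$ is the set of locally finite subsets (configurations) of $X$; for a bounded Borel set $\Lambda'$, $N_{\Lambda'}(x)=|x\cap\Lambda'|$; $\mathcal{B}_\Lambda$ is the $\sigma$-algebra on $\Gamma_X$ generated by the functions $N_{\Lambda'}$ with $\Lambda'\subset\Lambda$ Borel with compact closure (such sets $A$ are called cylinder sets). $\hbar$ is the reduced Planck constant. The ideal gas here means no interaction between particles: each particle only carries the one-body weight $K_2(\gamma)/\gamma$. *)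

theory Defs
  imports "HOL-Analysis.Analysis"
begin

(* C^infinity on an (open) set: differentiable, with every directional derivative again smooth *)
coinductive smooth_on :: "'a::real_normed_vector set \<Rightarrow> ('a \<Rightarrow> real) \<Rightarrow> bool" for S where
  smooth_onI: "(\<forall>x\<in>S. (f has_derivative D x) (at x)) \<Longrightarrow> (\<forall>v. smooth_on S (\<lambda>x. D x v))
     \<Longrightarrow> smooth_on S f"

definition besselK :: "real \<Rightarrow> real \<Rightarrow> real" where
  "besselK \<nu> x = integral {0..} (\<lambda>t. exp (- x * cosh t) * cosh (\<nu> * t))"

(* configurations: locally finite subsets of X (X identified with its Fermi-Walker coordinate domain) *)
definition configs :: "(real^3) set \<Rightarrow> (real^3) set set" where
  "configs X = {s. s \<subseteq> X \<and> (\<forall>K. compact K \<and> K \<subseteq> X \<longrightarrow> finite (s \<inter> K))}"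

definition count_in :: "(real^3) set \<Rightarrow> (real^3) set \<Rightarrow> nat" where
  "count_in L s = card (s \<inter> L)"

(* B_Lambda: sigma-algebra on configs X generated by the functions N_L, L \<subseteq> Lambda Borel
   with compact closure (generated by the preimages of points, the N_L being nat-valued) *)
definition cyl_sigma :: "(real^3) set \<Rightarrow> (real^3) set \<Rightarrow> (real^3) set set set" where
  "cyl_sigma X \<Lambda> = sigma_sets (configs X)
     {{s \<in> configs X. count_in L s = k} | L k. L \<subseteq> \<Lambda> \<and> L \<in> sets borel \<and> compact (closure L)}"

abbreviation leb_on :: "(real^3) set \<Rightarrow> (real^3) measure" where
  "leb_on \<Lambda> \<equiv> restrict_space lborel \<Lambda>"

definition partition_fun :: "(real^3) set \<Rightarrow> (real^3 \<Rightarrow> real) \<Rightarrow> real" where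
  "partition_fun \<Lambda> w = (\<Sum>n. (integral\<^sup>L (leb_on \<Lambda>) w) ^ n / fact n)"

definition spec_num :: "(real^3) set \<Rightarrow> (real^3) set \<Rightarrow> (real^3 \<Rightarrow> real)
    \<Rightarrow> (real^3) set set \<Rightarrow> (real^3) set \<Rightarrow> real" where
  "spec_num X \<Lambda> w A s = (\<Sum>n. integral\<^sup>L (PiM {..<n} (\<lambda>_. leb_on \<Lambda>))
      (\<lambda>xs. indicator A (xs ` {..<n} \<union> (s \<inter> (X - \<Lambda>))) * (\<Prod>i<n. w (xs i))) / fact n)"

definition spec :: "(real^3) set \<Rightarrow> (real^3) set \<Rightarrow> (real^3 \<Rightarrow> real)
    \<Rightarrow> (real^3) set set \<Rightarrow> (real^3) set \<Rightarrow> real" where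
  "spec X \<Lambda> w A s = spec_num X \<Lambda> w A s / partition_fun \<Lambda> w"

(* physical quantities; alpha y x with y = 1/c, hb = reduced Planck constant *)
definition z_rel :: "real \<Rightarrow> real \<Rightarrow> real \<Rightarrow> real \<Rightarrow> real \<Rightarrow> real" where
  "z_rel m \<beta> \<mu> hb c = 4 * pi * (m * c) ^ 3 / (2 * pi * hb) ^ 3 * exp (\<beta> * (m * c\<^sup>2 + \<mu>))"

definition gamma_rel :: "(real \<Rightarrow> real^3 \<Rightarrow> real) \<Rightarrow> real \<Rightarrow> real \<Rightarrow> real \<Rightarrow> real^3 \<Rightarrow> real" where
  "gamma_rel \<alpha> \<beta> m c x = \<alpha> (1 / c) x * \<beta> * m * c\<^sup>2"

definition w_rel :: "(real \<Rightarrow> real^3 \<Rightarrow> real) \<Rightarrow> real \<Rightarrow> real \<Rightarrow> real \<Rightarrow> real \<Rightarrow> real \<Rightarrow> real^3 \<Rightarrow> real" where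
  "w_rel \<alpha> \<beta> m \<mu> hb c x =
     z_rel m \<beta> \<mu> hb c * besselK 2 (gamma_rel \<alpha> \<beta> m c x) / gamma_rel \<alpha> \<beta> m c x"

definition z_newt :: "real \<Rightarrow> real \<Rightarrow> real \<Rightarrow> real \<Rightarrow> real" where
  "z_newt m \<beta> \<mu> hb = (m / (2 * pi * hb\<^sup>2 * \<beta>)) powr (3 / 2) * exp (\<beta> * \<mu>)"

definition alpha2 :: "(real \<Rightarrow> real^3 \<Rightarrow> real) \<Rightarrow> real^3 \<Rightarrow> real" where
  "alpha2 \<alpha> x = deriv (deriv (\<lambda>y. \<alpha> y x)) 0"

definition w_newt :: "(real \<Rightarrow> real^3 \<Rightarrow> real) \<Rightarrow> real \<Rightarrow> real \<Rightarrow> real \<Rightarrow> real \<Rightarrow> real^3 \<Rightarrow> real" where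
  "w_newt \<alpha> \<beta> m \<mu> hb x = z_newt m \<beta> \<mu> hb * exp (- (1 / 2) * \<beta> * m * alpha2 \<alpha> x)"

end

theory Submission
  imports Defs "HOL-Real_Asymp.Real_Asymp" "HOL-Probability.Probability"
begin


lemma cosh_ge_quad: "cosh (x::real) \<ge> 1 + x^2/2"
proof -
  let ?f = "\<lambda>n. if even n then x ^ n /\<^sub>R fact n else 0"
  have s: "summable ?f" using cosh_converges sums_summable by blast
  have "sum ?f {..<3} \<le> suminf ?f"
    by (rule sum_le_suminf[OF s]) (auto simp: zero_le_even_power)
  moreover have "sum ?f {..<3} = 1 + x^2/2"
    by (simp add: eval_nat_numeral)
  ultimately show ?thesis using cosh_converges sums_unique by metis
qed

lemma cosh_le_exp: "(x::real) \<ge> 0 \<Longrightarrow> cosh x \<le> exp x"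
  by (simp add: cosh_def)

lemma cosh_meas[measurable]: "cosh \<in> borel_measurable (borel :: real measure)"
  by (intro borel_measurable_continuous_onI continuous_intros)

definition Hb :: "real \<Rightarrow> real \<Rightarrow> real" where
  "Hb g u = indicator {0..} u * (exp (- (g * (cosh (sqrt (2/g) * u) - 1))) * cosh (2 * sqrt (2/g) * u))"

lemma Hb_meas[measurable]: "Hb g \<in> borel_measurable borel"
  unfolding Hb_def by measurable

lemma Hb_lim: "((\<lambda>g. Hb g u) \<longlongrightarrow> indicator {0..} u * exp (- (u^2))) at_top"
proof (cases "u > 0")
  case True
  have 1: "((\<lambda>g::real. g * (cosh (sqrt (2/g) * u) - 1)) \<longlongrightarrow> u * (u * (2 powr (1 / 2) * 2 powr (1 / 2))) / 2) at_top"
    using True by real_asymp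
  have 2: "((\<lambda>g::real. cosh (2 * sqrt (2/g) * u)) \<longlongrightarrow> 1) at_top"
    by real_asymp
  have e: "u * (u * (2 powr (1 / 2) * 2 powr (1 / 2))) / 2 = u^2"
    by (simp add: powr_add[symmetric] power2_eq_square)
  have 3: "((\<lambda>g::real. exp (- (g * (cosh (sqrt (2/g) * u) - 1))) * cosh (2 * sqrt (2/g) * u)) \<longlongrightarrow> exp (- (u^2)) * 1) at_top"
    by (intro tendsto_mult tendsto_exp tendsto_minus 1[unfolded e] 2)
  show ?thesis unfolding Hb_def using True
    by (intro tendsto_mult tendsto_const 3[simplified])
next
  case False
  then show ?thesis
  proof (cases "u = 0")
    case True then show ?thesis by (simp add: Hb_def)
  next
    case False
    with \<open>\<not> u > 0\<close> have "u < 0" by auto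
    then show ?thesis by (simp add: Hb_def)
  qed
qed

definition Db :: "real \<Rightarrow> real" where "Db u = indicator {0..} u * exp (4 - u)"

lemma Db_meas[measurable]: "Db \<in> borel_measurable borel"
  unfolding Db_def by measurable

lemma Db_integrable: "integrable lborel Db"
proof -
  have "(\<lambda>x. exp (- 1 * x) :: real) integrable_on {0..}"
    by (rule integrable_on_exp_minus_to_infinity) simp
  then have "(\<lambda>x. exp 4 * exp (- 1 * x) :: real) integrable_on {0..}"
    by (rule integrable_on_mult_right)
  then have "(\<lambda>x. exp (4 - x) :: real) integrable_on {0..}"
    by (simp add: exp_diff exp_minus field_simps)
  then have "set_integrable lebesgue {0..} (\<lambda>x. exp (4 - x) :: real)"
    by (intro nonnegative_absolutely_integrable_1) auto
  then have "integrable lebesgue Db"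
    unfolding set_integrable_def Db_def by simp
  then show ?thesis
    by (subst (asm) integrable_completion) auto
qed

lemma Hb_bound:
  assumes g: "g \<ge> 1"
  shows "norm (Hb g u) \<le> Db u"
proof (cases "u \<ge> 0")
  case False then show ?thesis by (simp add: Hb_def Db_def)
next
  case True
  define r where "r = sqrt (2/g)"
  have r0: "r > 0" using g by (simp add: r_def)
  have rr: "r^2 = 2/g" using g by (simp add: r_def)
  have r2: "r \<le> 3/2"
  proof -
    have "2/g \<le> (3/2)^2" using g by (auto simp: field_simps)
    then have "r \<le> sqrt ((3/2)^2)" unfolding r_def by (rule real_sqrt_le_mono)
    then show ?thesis by simp
  qed
  have A: "g * (cosh (r * u) - 1) \<ge> u^2"
  proof -
    have "g * (cosh (r * u) - 1) \<ge> g * ((r*u)^2/2)"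
      using cosh_ge_quad[of "r*u"] g by (intro mult_left_mono) auto
    also have "g * ((r*u)^2/2) = u^2"
    proof -
      have "(r*u)^2 = 2/g*u^2" by (simp add: power_mult_distrib rr)
      then show ?thesis using g by simp
    qed
    finally show ?thesis .
  qed
  have B: "cosh (2 * r * u) \<le> exp (3 * u)"
  proof -
    have "cosh (2*r*u) \<le> exp (2*r*u)" using r0 True by (intro cosh_le_exp) simp
    also have "\<dots> \<le> exp (3*u)"
    proof -
      have "2*r*u \<le> 3*u" using r2 True by (intro mult_right_mono) auto
      then show ?thesis by simp
    qed
    finally show ?thesis .
  qed
  have "norm (Hb g u) = exp (- (g * (cosh (r * u) - 1))) * cosh (2 * r * u)"
    using True by (simp add: Hb_def r_def)
  also have "\<dots> \<le> exp (- (u^2)) * exp (3*u)"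
    using A B by (intro mult_mono) auto
  also have "\<dots> = exp (- (u^2) + 3*u)" by (simp add: exp_add[symmetric])
  also have "\<dots> \<le> exp (4 - u)"
  proof -
    have "0 \<le> (u - 2)^2" by simp
    moreover have "(u-2)^2 = u^2 - 4*u + 4" by (simp add: power2_eq_square algebra_simps)
    ultimately have "- (u^2) + 3*u \<le> 4 - u" by linarith
    then show ?thesis by simp
  qed
  finally show ?thesis using True by (simp add: Db_def)
qed

lemma Db_nonneg: "Db u \<ge> 0" by (simp add: Db_def)

lemma Hb_bound': "g \<ge> 1 \<Longrightarrow> \<bar>Hb g u\<bar> \<le> Db u"
  using Hb_bound by simp

lemma Hb_integrable: "g \<ge> 1 \<Longrightarrow> integrable lborel (Hb g)"
  by (rule Bochner_Integration.integrable_bound[OF Db_integrable]) (auto intro!: AE_I2 simp: Hb_bound' abs_of_nonneg[OF Db_nonneg])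

lemma Hb_int_lim: "((\<lambda>g. integral\<^sup>L lborel (Hb g)) \<longlongrightarrow> sqrt pi / 2) at_top"
proof -
  have "((\<lambda>g. integral\<^sup>L lborel (Hb g)) \<longlongrightarrow> integral\<^sup>L lborel (\<lambda>u. indicator {0..} u * exp (- (u^2)))) at_top"
  proof (rule integral_dominated_convergence_at_top[OF _ _ Db_integrable])
    show "AE x in lborel. ((\<lambda>i. Hb i x) \<longlongrightarrow> indicator {0..} x * exp (- x\<^sup>2)) at_top"
      by (simp add: Hb_lim)
    show "\<forall>\<^sub>F i in at_top. AE x in lborel. norm (Hb i x) \<le> Db x"
      using eventually_ge_at_top[of "1::real"] by eventually_elim (auto intro!: AE_I2 simp: Hb_bound')
  qed auto
  also have "integral\<^sup>L lborel (\<lambda>u. indicator {0..} u * exp (- (u^2))) = sqrt pi / 2"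
    using gaussian_moment_0 has_bochner_integral_integral_eq by fastforce
  finally show ?thesis .
qed

lemma besselK_Hb:
  assumes g: "g \<ge> 1"
  shows "besselK 2 g = exp (- g) * sqrt (2/g) * integral\<^sup>L lborel (Hb g)"
proof -
  define r where "r = sqrt (2/g)"
  have r0: "r > 0" using g by (simp add: r_def)
  define F where "F t = indicator {0..} t * (exp (- g * cosh t) * cosh (2 * t))" for t :: real
  have FH: "F (0 + r * u) = exp (- g) * Hb g u" for u
  proof -
    have "indicator {0..} (r*u) = (indicator {0..} u :: real)"
      using r0 by (simp add: indicator_def zero_le_mult_iff)
    moreover have "exp (- g * cosh (r*u)) = exp (-g) * exp (- (g * (cosh (r * u) - 1)))"
      by (simp add: exp_add[symmetric] algebra_simps)
    ultimately show ?thesis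
      by (simp add: F_def Hb_def r_def mult.assoc)
  qed
  have iH: "integrable lborel (\<lambda>u. F (0 + r * u))"
    unfolding FH using Hb_integrable[OF g] by simp
  have iF: "integrable lborel F"
    using iH lborel_integrable_real_affine_iff[of r F 0] r0 by simp
  have "integral\<^sup>L lborel F = \<bar>r\<bar> *\<^sub>R integral\<^sup>L lborel (\<lambda>u. F (0 + r * u))"
    using lborel_integral_real_affine[of r F 0] r0 by simp
  also have "\<dots> = r * exp (-g) * integral\<^sup>L lborel (Hb g)"
    unfolding FH using r0 by simp
  finally have 1: "integral\<^sup>L lborel F = r * exp (-g) * integral\<^sup>L lborel (Hb g)" .
  have si: "set_integrable lborel {0..} (\<lambda>t. exp (- g * cosh t) * cosh (2 * t))"
    using iF unfolding set_integrable_def F_def by simp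
  have "besselK 2 g = integral {0..} (\<lambda>t. exp (- g * cosh t) * cosh (2 * t))"
    by (simp add: besselK_def)
  also have "\<dots> = (LINT t:{0..}|lborel. exp (- g * cosh t) * cosh (2 * t))"
    using set_borel_integral_eq_integral(2)[OF si] by simp
  also have "\<dots> = integral\<^sup>L lborel F"
    unfolding set_lebesgue_integral_def F_def by simp
  finally show ?thesis using 1 by (simp add: r_def)
qed




lemma smooth_onE:
  assumes "smooth_on S f"
  obtains D where "\<And>x. x \<in> S \<Longrightarrow> (f has_derivative D x) (at x)" "\<And>v. smooth_on S (\<lambda>x. D x v)"
  using assms by (cases rule: smooth_on.cases) blast

lemma smooth_on_cont:
  assumes "smooth_on S f"
  shows "continuous_on S f"
proof -
  obtain D where "\<And>x. x \<in> S \<Longrightarrow> (f has_derivative D x) (at x)"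
    using smooth_onE[OF assms] by blast
  then show ?thesis
    by (meson continuous_at_imp_continuous_on has_derivative_continuous)
qed

lemma partial_fst:
  fixes f :: "real \<times> 'b::real_normed_vector \<Rightarrow> real"
  assumes "(f has_derivative D) (at (y, x))"
  shows "((\<lambda>t. f (t, x)) has_real_derivative D (1, 0)) (at y)"
proof -
  have i: "((\<lambda>t. (t, x)) has_derivative (\<lambda>h. (h, 0))) (at y)"
    by (auto intro!: derivative_eq_intros)
  have c: "((f \<circ> (\<lambda>t. (t, x))) has_derivative (D \<circ> (\<lambda>h. (h, 0)))) (at y)"
    by (rule diff_chain_at[OF i]) (simp add: assms)
  have lin: "linear D" using assms has_derivative_linear by blast
  have eq: "(D \<circ> (\<lambda>h. (h, 0))) = (*) (D (1,0))"
  proof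
    fix h :: real
    have "(h, 0::'b) = h *\<^sub>R (1, 0)" by simp
    then show "(D \<circ> (\<lambda>h. (h, 0))) h = D (1,0) * h"
      using linear_cmul[OF lin, of h "(1,0)"] by (simp add: mult.commute)
  qed
  have e2: "(\<lambda>t. f (t, x)) = f \<circ> (\<lambda>t. (t, x))" by (simp add: comp_def)
  show ?thesis
    unfolding has_field_derivative_def e2 using c unfolding eq .
qed

lemma alpha_facts:
  fixes \<alpha> :: "real \<Rightarrow> 'b::real_normed_vector \<Rightarrow> real" and V :: "'b set"
  assumes V: "open V" and eps: "\<epsilon> > 0"
    and smooth: "smooth_on ({-\<epsilon><..<\<epsilon>} \<times> V) (\<lambda>p. \<alpha> (fst p) (snd p))"
    and alpha0: "\<And>x. x \<in> V \<Longrightarrow> \<alpha> 0 x = 1"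
    and dalpha0: "\<And>x. x \<in> V \<Longrightarrow> deriv (\<lambda>y. \<alpha> y x) 0 = 0"
  shows "\<exists>g2. continuous_on ({-\<epsilon><..<\<epsilon>} \<times> V) g2
     \<and> (\<forall>x\<in>V. deriv (deriv (\<lambda>y. \<alpha> y x)) 0 = g2 (0, x))
     \<and> (\<forall>x\<in>V. \<forall>h. 0 < h \<and> h < \<epsilon> \<longrightarrow> (\<exists>t. 0 < t \<and> t < h \<and> \<alpha> h x = 1 + g2 (t, x) / 2 * h^2))"
proof -
  let ?S = "{-\<epsilon><..<\<epsilon>} \<times> V"
  obtain D1 where D1: "\<And>p. p \<in> ?S \<Longrightarrow> ((\<lambda>p. \<alpha> (fst p) (snd p)) has_derivative D1 p) (at p)"
    and s1: "\<And>v. smooth_on ?S (\<lambda>p. D1 p v)"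
    using smooth_onE[OF smooth] by blast
  define g1 where "g1 p = D1 p (1, 0)" for p
  obtain D2 where D2: "\<And>p. p \<in> ?S \<Longrightarrow> (g1 has_derivative D2 p) (at p)"
    and s2: "\<And>v. smooth_on ?S (\<lambda>p. D2 p v)"
    using smooth_onE[OF s1[of "(1,0)"]] unfolding g1_def by blast
  define g2 where "g2 p = D2 p (1, 0)" for p
  have cg2: "continuous_on ?S g2" unfolding g2_def by (rule smooth_on_cont[OF s2])
  have E1: "((\<lambda>t. \<alpha> t x) has_real_derivative g1 (y, x)) (at y)" if "x \<in> V" "\<bar>y\<bar> < \<epsilon>" for x y
    using partial_fst[OF D1[of "(y,x)"]] that unfolding g1_def by (auto simp: abs_less_iff)
  have E2: "((\<lambda>t. g1 (t, x)) has_real_derivative g2 (y, x)) (at y)" if "x \<in> V" "\<bar>y\<bar> < \<epsilon>" for x y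
    using partial_fst[OF D2[of "(y,x)"]] that unfolding g2_def by (auto simp: abs_less_iff)
  have A2: "deriv (deriv (\<lambda>y. \<alpha> y x)) 0 = g2 (0, x)" if x: "x \<in> V" for x
  proof -
    have "(deriv (\<lambda>y. \<alpha> y x) has_real_derivative g2 (0, x)) (at 0)"
    proof (rule has_field_derivative_transform_within_open[OF E2[OF x] open_greaterThanLessThan])
      show "0 \<in> {-\<epsilon><..<\<epsilon>}" using eps by simp
      fix t assume "t \<in> {-\<epsilon><..<\<epsilon>}"
      then show "g1 (t, x) = deriv (\<lambda>y. \<alpha> y x) t"
        using E1[OF x, of t] by (simp add: DERIV_imp_deriv abs_less_iff)
    qed (use eps in auto)
    then show ?thesis by (rule DERIV_imp_deriv)
  qed
  have T: "\<exists>t. 0 < t \<and> t < h \<and> \<alpha> h x = 1 + g2 (t, x) / 2 * h^2"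
    if x: "x \<in> V" and h: "0 < h" "h < \<epsilon>" for x h
  proof -
    define diff where "diff m = (if m = 0 then (\<lambda>t. \<alpha> t x) else if m = 1 then (\<lambda>t. g1 (t, x)) else (\<lambda>t. g2 (t, x)))" for m :: nat
    have "\<exists>t::real. 0 < t \<and> t < h \<and>
      (\<lambda>t. \<alpha> t x) h = sum (\<lambda>m. (diff m 0 / fact m) * h ^ m) {..<2} + (diff 2 t / fact 2) * h ^ 2"
    proof (rule Maclaurin[OF h(1)])
      show "\<forall>m t. m < 2 \<and> 0 \<le> t \<and> t \<le> h \<longrightarrow> DERIV (diff m) t :> diff (Suc m) t"
      proof (intro allI impI)
        fix m t assume mt: "m < (2::nat) \<and> 0 \<le> t \<and> t \<le> h"
        then have "\<bar>t\<bar> < \<epsilon>" using h by auto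
        then show "DERIV (diff m) t :> diff (Suc m) t"
          using mt E1[OF x] E2[OF x] by (cases m) (auto simp: diff_def)
      qed
    qed (auto simp: diff_def)
    then obtain t where t: "0 < t" "t < h" "\<alpha> h x = sum (\<lambda>m. (diff m 0 / fact m) * h ^ m) {..<2} + (diff 2 t / fact 2) * h ^ 2"
      by auto
    have "g1 (0, x) = 0"
      using dalpha0[OF x] E1[OF x, of 0] eps by (simp add: DERIV_imp_deriv)
    then have "\<alpha> h x = 1 + g2 (t, x) / 2 * h^2"
      using t(3) alpha0[OF x] by (simp add: diff_def eval_nat_numeral)
    then show ?thesis using t by blast
  qed
  show ?thesis using cg2 A2 T by blast
qed




lemma pf_exp: "partition_fun L w = exp (integral\<^sup>L (leb_on L) w)"
proof -
  have "(\<lambda>n. (integral\<^sup>L (leb_on L) w) ^ n / fact n) sums exp (integral\<^sup>L (leb_on L) w)"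
    using exp_converges[of "integral\<^sup>L (leb_on L) w"] by (simp add: divide_inverse mult.commute)
  then show ?thesis unfolding partition_fun_def by (simp add: sums_iff)
qed

locale wsetup =
  fixes L :: "(real^3) set" and W :: "real \<Rightarrow> real^3 \<Rightarrow> real" and W0 :: "real^3 \<Rightarrow> real" and B :: real
  assumes Lb: "L \<in> sets borel" and Lf: "emeasure lborel L < \<infinity>"
    and Wm: "\<And>c. W c \<in> borel_measurable (leb_on L)"
    and W0m: "W0 \<in> borel_measurable (leb_on L)"
    and B0: "B \<ge> 0"
    and Wb: "\<And>c x. x \<in> L \<Longrightarrow> \<bar>W c x\<bar> \<le> B"
    and Wp: "\<And>c x. x \<in> L \<Longrightarrow> W c x > 0"
    and W0p: "\<And>x. x \<in> L \<Longrightarrow> W0 x > 0"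
    and lim: "\<And>x. x \<in> L \<Longrightarrow> ((\<lambda>c. W c x) \<longlongrightarrow> W0 x) at_top"
begin

abbreviation "M \<equiv> leb_on L"

lemma spM[simp]: "space M = L"
  using Lb by (simp add: space_restrict_space sets.sets_into_space)

lemma finM: "finite_measure M"
proof
  have "emeasure M (space M) = emeasure lborel L"
    using Lb by (simp add: emeasure_restrict_space)
  then show "emeasure M (space M) \<noteq> \<infinity>" using Lf by simp
qed

lemma int_lim: "((\<lambda>c. integral\<^sup>L M (W c)) \<longlongrightarrow> integral\<^sup>L M W0) at_top"
proof (rule integral_dominated_convergence_at_top[where w="\<lambda>_. B"])
  show "integrable M (\<lambda>_. B)" using finite_measure.integrable_const[OF finM] by blast
  show "AE x in M. ((\<lambda>i. W i x) \<longlongrightarrow> W0 x) at_top"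
    by (rule AE_I2) (simp add: lim)
  show "\<forall>\<^sub>F i in at_top. AE x in M. norm (W i x) \<le> B"
    by (intro always_eventually allI AE_I2) (simp add: Wb)
qed (auto simp: Wm W0m)

lemma pf_lim: "((\<lambda>c. partition_fun L (W c)) \<longlongrightarrow> partition_fun L W0) at_top"
  unfolding pf_exp by (intro tendsto_exp int_lim)

definition P :: "nat \<Rightarrow> (nat \<Rightarrow> real^3) measure" where "P n = PiM {..<n} (\<lambda>_. M)"

lemma spP: "space (P n) = Pi\<^sub>E {..<n} (\<lambda>_. L)"
  by (simp add: P_def space_PiM)

lemma finP: "finite_measure (P n)"
proof -
  interpret finite_measure M by (rule finM)
  interpret product_sigma_finite "\<lambda>_::nat. M"
    by (simp add: product_sigma_finite_def sigma_finite_measure)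
  have "emeasure (P n) (space (P n)) = emeasure (P n) (Pi\<^sub>E {..<n} (\<lambda>_. L))"
    by (simp add: spP)
  also have "\<dots> = (\<Prod>i\<in>{..<n}. emeasure M L)"
    unfolding P_def by (rule emeasure_PiM) (auto simp: Lb sets_restrict_space_iff)
  also have "\<dots> = ennreal (measure M L ^ n)" by (simp add: emeasure_eq_measure ennreal_power)
  also have "\<dots> \<noteq> \<infinity>" by simp
  finally show ?thesis by (intro finite_measureI)
qed

lemma measP: "measure (P n) (space (P n)) = measure M L ^ n"
proof -
  interpret finite_measure M by (rule finM)
  interpret product_sigma_finite "\<lambda>_::nat. M"
    by (simp add: product_sigma_finite_def sigma_finite_measure)
  have "emeasure (P n) (space (P n)) = emeasure (P n) (Pi\<^sub>E {..<n} (\<lambda>_. L))"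
    by (simp add: spP)
  also have "\<dots> = (\<Prod>i\<in>{..<n}. emeasure M L)"
    unfolding P_def by (rule emeasure_PiM) (auto simp: Lb sets_restrict_space_iff)
  also have "\<dots> = ennreal (measure M L ^ n)" by (simp add: emeasure_eq_measure ennreal_power)
  finally show ?thesis by (simp add: measure_def)
qed

lemma prodmeas:
  fixes w :: "real^3 \<Rightarrow> real"
  assumes "w \<in> borel_measurable M"
  shows "(\<lambda>xs. \<Prod>i<n. w (xs i)) \<in> borel_measurable (P n)"
proof -
  have "(\<lambda>xs. w (xs i)) \<in> borel_measurable (P n)" if "i \<in> {..<n}" for i
  proof -
    have "(\<lambda>xs. xs i) \<in> PiM {..<n} (\<lambda>_. M) \<rightarrow>\<^sub>M M" using that by (rule measurable_component_singleton)
    then show ?thesis unfolding P_def using assms by (rule measurable_compose)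
  qed
  then show ?thesis by (rule borel_measurable_prod[where f="\<lambda>i xs. w (xs i)", simplified])
qed

definition F :: "(real^3) set \<Rightarrow> (real^3) set set \<Rightarrow> (real^3) set \<Rightarrow> nat \<Rightarrow> (nat \<Rightarrow> real^3) \<Rightarrow> real" where
  "F X A s n xs = indicator A (xs ` {..<n} \<union> (s \<inter> (X - L)))"

definition T :: "(real^3) set \<Rightarrow> (real^3) set set \<Rightarrow> (real^3) set \<Rightarrow> (real^3 \<Rightarrow> real) \<Rightarrow> nat \<Rightarrow> real" where
  "T X A s w n = integral\<^sup>L (P n) (\<lambda>xs. F X A s n xs * (\<Prod>i<n. w (xs i)))"

lemma spec_num_T: "spec_num X L w A s = (\<Sum>n. T X A s w n / fact n)"
  unfolding spec_num_def T_def F_def P_def by simp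

lemma F01: "0 \<le> F X A s n xs" "F X A s n xs \<le> 1"
  by (auto simp: F_def indicator_def)

lemma not_meas_zero:
  assumes nm: "F X A s n \<notin> borel_measurable (P n)"
    and wm: "w \<in> borel_measurable M" and wp: "\<And>x. x \<in> L \<Longrightarrow> w x > 0"
  shows "T X A s w n = 0"
proof -
  have "\<not> integrable (P n) (\<lambda>xs. F X A s n xs * (\<Prod>i<n. w (xs i)))"
  proof
    assume "integrable (P n) (\<lambda>xs. F X A s n xs * (\<Prod>i<n. w (xs i)))"
    then have m1: "(\<lambda>xs. F X A s n xs * (\<Prod>i<n. w (xs i))) \<in> borel_measurable (P n)" by auto
    have "(\<lambda>xs. F X A s n xs * (\<Prod>i<n. w (xs i)) / (\<Prod>i<n. w (xs i))) \<in> borel_measurable (P n)"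
      using m1 prodmeas[OF wm] by (rule borel_measurable_divide)
    moreover have "F X A s n xs * (\<Prod>i<n. w (xs i)) / (\<Prod>i<n. w (xs i)) = F X A s n xs"
      if "xs \<in> space (P n)" for xs
    proof -
      have "\<forall>i<n. xs i \<in> L" using that by (auto simp: spP)
      then have "(\<Prod>i<n. w (xs i)) > 0" using wp by (intro prod_pos) auto
      then have p0: "(\<Prod>i<n. w (xs i)) \<noteq> 0" by (metis order_less_irrefl)
      show ?thesis using p0 by (rule nonzero_mult_div_cancel_right)
    qed
    ultimately show False using nm measurable_cong by (metis (no_types, lifting))
  qed
  then show ?thesis unfolding T_def by (rule not_integrable_integral_eq)
qed

lemma T_lim: "((\<lambda>c. T X A s (W c) n) \<longlongrightarrow> T X A s W0 n) at_top"
proof (cases "F X A s n \<in> borel_measurable (P n)")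
  case True
  interpret fP: finite_measure "P n" by (rule finP)
  show ?thesis unfolding T_def
  proof (rule integral_dominated_convergence_at_top[where w="\<lambda>_. B^n"])
    show "(\<lambda>xs. F X A s n xs * (\<Prod>i<n. W0 (xs i))) \<in> borel_measurable (P n)"
      using True prodmeas[OF W0m] by (rule borel_measurable_times)
    show "(\<lambda>xs. F X A s n xs * (\<Prod>i<n. W c (xs i))) \<in> borel_measurable (P n)" for c
      using True prodmeas[OF Wm] by (rule borel_measurable_times)
    show "integrable (P n) (\<lambda>_. B^n)" by simp
    show "AE x in P n. ((\<lambda>c. F X A s n x * (\<Prod>i<n. W c (x i))) \<longlongrightarrow> F X A s n x * (\<Prod>i<n. W0 (x i))) at_top"
    proof (rule AE_I2)
      fix x assume "x \<in> space (P n)"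
      then have "\<forall>i<n. x i \<in> L" by (auto simp: spP)
      then show "((\<lambda>c. F X A s n x * (\<Prod>i<n. W c (x i))) \<longlongrightarrow> F X A s n x * (\<Prod>i<n. W0 (x i))) at_top"
        by (intro tendsto_mult tendsto_const tendsto_prod lim) auto
    qed
    have bnd: "norm (F X A s n x * (\<Prod>i<n. W c (x i))) \<le> B^n" if "x \<in> space (P n)" for c x
    proof -
      have xi: "\<forall>i<n. x i \<in> L" using that by (auto simp: spP)
      have "\<bar>\<Prod>i<n. W c (x i)\<bar> = (\<Prod>i<n. \<bar>W c (x i)\<bar>)" by (simp add: abs_prod)
      also have "\<dots> \<le> (\<Prod>i<n. B)" using xi Wb by (intro prod_mono) auto
      finally have "\<bar>\<Prod>i<n. W c (x i)\<bar> \<le> B^n" by simp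
      moreover have "\<bar>F X A s n x\<bar> \<le> 1" using F01 by (simp add: abs_le_iff)
      ultimately have "\<bar>F X A s n x\<bar> * \<bar>\<Prod>i<n. W c (x i)\<bar> \<le> 1 * B^n"
        by (intro mult_mono) auto
      then show ?thesis by (simp add: abs_mult)
    qed
    show "\<forall>\<^sub>F c in at_top. AE x in P n. norm (F X A s n x * (\<Prod>i<n. W c (x i))) \<le> B^n"
      using bnd by (auto intro!: always_eventually AE_I2)
  qed
next
  case False
  then have "T X A s (W c) n = 0" for c using not_meas_zero Wm Wp by blast
  moreover have "T X A s W0 n = 0" using not_meas_zero False W0m W0p by blast
  ultimately show ?thesis by simp
qed

lemma T_bound: "\<bar>T X A s (W c) n\<bar> \<le> (B * measure M L)^n"
proof -
  interpret fP: finite_measure "P n" by (rule finP)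
  let ?g = "\<lambda>xs. F X A s n xs * (\<Prod>i<n. W c (xs i))"
  have g0: "0 \<le> ?g xs" if "xs \<in> space (P n)" for xs
  proof -
    have "\<forall>i<n. xs i \<in> L" using that by (auto simp: spP)
    then show ?thesis using F01 Wp by (intro mult_nonneg_nonneg prod_nonneg) (auto intro: less_imp_le)
  qed
  have gB: "?g xs \<le> B^n" if "xs \<in> space (P n)" for xs
  proof -
    have xi: "\<forall>i<n. xs i \<in> L" using that by (auto simp: spP)
    have "(\<Prod>i<n. W c (xs i)) \<le> (\<Prod>i<n. B)" using xi Wb Wp
      by (intro prod_mono) (auto intro: less_imp_le simp: abs_le_iff)
    moreover have "0 \<le> (\<Prod>i<n. W c (xs i))" using xi Wp by (intro prod_nonneg) (auto intro: less_imp_le)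
    ultimately show ?thesis using F01[of X A s n xs] by (simp add: mult_le_one mult_left_le_one_le mult_right_le_one_le mult_le_cancel_right1 order_trans[OF mult_right_mono[of _ 1]])
  qed
  have "T X A s (W c) n \<le> integral\<^sup>L (P n) (\<lambda>_. B^n)"
    unfolding T_def using gB B0 by (intro integral_mono') auto
  also have "\<dots> = B^n * measure M L ^ n" by (simp add: measP)
  finally have 1: "T X A s (W c) n \<le> (B * measure M L)^n" by (simp add: power_mult_distrib)
  have "0 \<le> T X A s (W c) n" unfolding T_def using g0 by (rule Bochner_Integration.integral_nonneg)
  with 1 show ?thesis by simp
qed

lemma num_lim: "((\<lambda>c. spec_num X L (W c) A s) \<longlongrightarrow> spec_num X L W0 A s) at_top"
proof -
  have "eventually (\<lambda>c. summable (\<lambda>k. norm (T X A s (W c) k / fact k))) at_top \<and>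
           summable (\<lambda>n. norm (T X A s W0 n / fact n)) \<and>
           ((\<lambda>c. suminf (\<lambda>k. T X A s (W c) k / fact k)) \<longlongrightarrow> suminf (\<lambda>k. T X A s W0 k / fact k)) at_top"
  proof (rule tannerys_theorem[where M="\<lambda>k. (B * measure M L)^k / fact k"])
    show "((\<lambda>c. T X A s (W c) k / fact k) \<longlongrightarrow> T X A s W0 k / fact k) at_top" for k
      by (intro tendsto_divide T_lim tendsto_const) auto
    show "\<forall>\<^sub>F (k, c) in at_top \<times>\<^sub>F at_top. norm (T X A s (W c) k / fact k) \<le> (B * measure M L)^k / fact k"
      by (intro always_eventually) (auto simp: T_bound divide_right_mono)
    show "summable (\<lambda>k. (B * measure M L)^k / fact k)"
      using summable_exp[of "B * measure M L"] by (simp add: divide_inverse mult.commute)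
  qed auto
  then show ?thesis unfolding spec_num_T by blast
qed

lemma spec_lim: "((\<lambda>c. spec X L (W c) A s) \<longlongrightarrow> spec X L W0 A s) at_top"
  unfolding spec_def by (intro tendsto_divide num_lim pf_lim) (simp add: pf_exp)

end



lemma Hb_int_meas: "(\<lambda>g. integral\<^sup>L lborel (Hb g)) \<in> borel_measurable borel"
proof -
  have "case_prod Hb \<in> borel_measurable (borel \<Otimes>\<^sub>M lborel)"
    unfolding Hb_def[abs_def] by measurable
  then show ?thesis by (rule lborel.borel_measurable_lebesgue_integral)
qed

lemma cont_meas_leb:
  fixes f :: "real^3 \<Rightarrow> real"
  assumes "continuous_on L f"
  shows "f \<in> borel_measurable (leb_on L)"
proof -
  have "f \<in> borel_measurable (restrict_space borel L)"
    by (rule borel_measurable_continuous_on_restrict[OF assms])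
  moreover have "sets (restrict_space borel L) = sets (leb_on L)"
    by (simp add: sets_restrict_space)
  ultimately show ?thesis using measurable_cong_sets by blast
qed

lemma const_id:
  fixes \<beta> m \<mu> hb :: real
  assumes hb: "hb > 0" and \<beta>: "\<beta> > 0" and m: "m > 0"
  shows "4*pi*m^3* sqrt 2*exp(\<beta>*\<mu>)/(2*pi*hb)^3 / (\<beta>*m* sqrt(\<beta>*m)) * (sqrt pi / 2) = z_newt m \<beta> \<mu> hb"
proof -
  define q where "q = m / (2 * pi * hb\<^sup>2 * \<beta>)"
  have q0: "q > 0" using assms by (simp add: q_def)
  have "q powr (3/2) = q powr (1 + 1/2)" by simp
  also have "\<dots> = q powr 1 * q powr (1/2)" by (rule powr_add)
  also have "\<dots> = q * sqrt q" using q0 by (simp add: powr_half_sqrt)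
  finally have qp: "q powr (3/2) = q * sqrt q" .
  have sq: "sqrt q = sqrt m / (sqrt 2 * sqrt pi * hb * sqrt \<beta>)"
    using assms by (simp add: q_def real_sqrt_divide real_sqrt_mult)
  have s1: "sqrt (\<beta>*m) = sqrt \<beta> * sqrt m" by (simp add: real_sqrt_mult)
  have e2: "sqrt 2 * sqrt 2 = 2" and epi: "sqrt pi * sqrt pi = pi" and em: "sqrt m * sqrt m = m"
    using m by auto
  have pos: "sqrt \<beta> > 0" "sqrt m > 0" "sqrt pi > 0" "sqrt 2 > 0" using assms by auto
  show ?thesis
    unfolding z_newt_def q_def[symmetric] qp sq s1
    using assms pos e2 epi em
    by (simp add: q_def field_simps power3_eq_cube power2_eq_square)
qed




theorem theorem1:
  fixes X \<Lambda> V :: "(real^3) set"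
    and \<alpha> :: "real \<Rightarrow> real^3 \<Rightarrow> real"
    and \<beta> m \<mu> hb \<epsilon> :: real
  assumes X_open: "open X"
    and \<Lambda>_borel: "\<Lambda> \<in> sets borel"
    and \<Lambda>_cpt: "compact (closure \<Lambda>)"
    and V: "open V" "closure \<Lambda> \<subseteq> V" "V \<subseteq> X"
    and eps: "\<epsilon> > 0"
    and smooth: "smooth_on ({-\<epsilon><..<\<epsilon>} \<times> V) (\<lambda>p. \<alpha> (fst p) (snd p))"
    and alpha0: "\<And>x. x \<in> V \<Longrightarrow> \<alpha> 0 x = 1"
    and dalpha0: "\<And>x. x \<in> V \<Longrightarrow> deriv (\<lambda>y. \<alpha> y x) 0 = 0"
    and timelike: "\<And>y x. y > 0 \<Longrightarrow> x \<in> closure \<Lambda> \<Longrightarrow> \<alpha> y x > 0"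
    and hb: "hb > 0" and \<beta>: "\<beta> > 0" and m: "m > 0"
  shows "((\<lambda>c. partition_fun \<Lambda> (w_rel \<alpha> \<beta> m \<mu> hb c))
            \<longlongrightarrow> partition_fun \<Lambda> (w_newt \<alpha> \<beta> m \<mu> hb)) at_top
       \<and> partition_fun \<Lambda> (w_newt \<alpha> \<beta> m \<mu> hb)
            = exp (z_newt m \<beta> \<mu> hb * integral\<^sup>L (leb_on \<Lambda>) (\<lambda>x. exp (- (1 / 2) * \<beta> * m * alpha2 \<alpha> x)))
       \<and> (\<forall>A \<in> cyl_sigma X \<Lambda>. \<forall>s \<in> configs X.
            ((\<lambda>c. spec X \<Lambda> (w_rel \<alpha> \<beta> m \<mu> hb c) A s)
               \<longlongrightarrow> spec X \<Lambda> (w_newt \<alpha> \<beta> m \<mu> hb) A s) at_top)"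
proof -
  let ?S = "{-\<epsilon><..<\<epsilon>} \<times> V"
  define K where "K = closure \<Lambda>"
  have KV: "K \<subseteq> V" using V by (simp add: K_def)
  have Kc: "compact K" using \<Lambda>_cpt by (simp add: K_def)
  have LK: "\<Lambda> \<subseteq> K" by (simp add: K_def closure_subset)
  obtain g2 where cg2: "continuous_on ?S g2"
    and A2: "\<forall>x\<in>V. deriv (deriv (\<lambda>y. \<alpha> y x)) 0 = g2 (0, x)"
    and TT: "\<forall>x\<in>V. \<forall>h. 0 < h \<and> h < \<epsilon> \<longrightarrow> (\<exists>t. 0 < t \<and> t < h \<and> \<alpha> h x = 1 + g2 (t, x) / 2 * h^2)"
    using alpha_facts[OF V(1) eps smooth alpha0 dalpha0] by blast
  have calpha: "continuous_on ?S (\<lambda>p. \<alpha> (fst p) (snd p))" by (rule smooth_on_cont[OF smooth])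
  have alpha2_eq: "alpha2 \<alpha> x = g2 (0, x)" if "x \<in> V" for x
    using A2 that by (simp add: alpha2_def)
  define Kc2 where "Kc2 = {-\<epsilon>/2..\<epsilon>/2} \<times> K"
  have KcS: "Kc2 \<subseteq> ?S" using KV eps by (auto simp: Kc2_def)
  have "compact (g2 ` Kc2)"
    unfolding Kc2_def by (intro compact_continuous_image continuous_on_subset[OF cg2] compact_Times compact_Icc Kc) (use KcS Kc2_def in auto)
  then obtain M2 where M2pos: "M2 > 0" and M2: "\<And>p. p \<in> Kc2 \<Longrightarrow> \<bar>g2 p\<bar> \<le> M2"
    using compact_imp_bounded bounded_pos by (metis image_eqI real_norm_def)
  have Tay: "\<exists>t. 0 < t \<and> t < y \<and> \<alpha> y x = 1 + g2 (t, x) / 2 * y^2"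
    if "x \<in> K" "0 < y" "y \<le> \<epsilon>/2" for x y
    using TT that KV eps by auto
  have abound: "\<bar>\<alpha> y x - 1\<bar> \<le> M2/2 * y^2" if x: "x \<in> K" and y: "0 < y" "y \<le> \<epsilon>/2" for x y
  proof -
    obtain t where t: "0 < t" "t < y" "\<alpha> y x = 1 + g2 (t, x) / 2 * y^2" using Tay[OF x y] by blast
    have "(t, x) \<in> Kc2" using t y x eps by (auto simp: Kc2_def)
    then have "\<bar>g2 (t,x)\<bar> \<le> M2" by (rule M2)
    then have "\<bar>g2 (t, x) / 2 * y^2\<bar> \<le> M2/2 * y^2"
      by (simp add: abs_mult mult_right_mono)
    then show ?thesis using t by simp
  qed
  define G where "G g = integral\<^sup>L lborel (Hb g)" for g
  have "sqrt 1 < sqrt pi" using pi_gt3 by (subst real_sqrt_less_iff) simp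
  then have pi1: "1 < sqrt pi" by simp
  have "sqrt pi < sqrt (2^2)" using pi_less_4 by (subst real_sqrt_less_iff) simp
  then have pi2: "sqrt pi < 2" by simp
  have "\<forall>\<^sub>F g in at_top. dist (G g) (sqrt pi / 2) < 1/2"
    using Hb_int_lim unfolding G_def[abs_def] by (rule tendstoD) simp
  then obtain \<Gamma>0 where \<Gamma>0: "\<And>g. g \<ge> \<Gamma>0 \<Longrightarrow> dist (G g) (sqrt pi / 2) < 1/2"
    by (auto simp: eventually_at_top_linorder)
  define \<Gamma> where "\<Gamma> = max \<Gamma>0 1"
  have \<Gamma>1: "\<Gamma> \<ge> 1" by (simp add: \<Gamma>_def)
  have Gbds: "G g > 0 \<and> G g \<le> 2" if "g \<ge> \<Gamma>" for g
  proof -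
    have d: "\<bar>G g - sqrt pi/2\<bar> < 1/2" using \<Gamma>0[of g] that by (simp add: \<Gamma>_def dist_real_def)
    show ?thesis using d abs_less_iff[of "G g - sqrt pi/2" "1/2"] pi1 pi2 by linarith
  qed
  have Gpos: "G g > 0" and Gle: "G g \<le> 2" if "g \<ge> \<Gamma>" for g using Gbds[OF that] by auto
  have ev1: "\<forall>\<^sub>F c in at_top. c > 0 \<and> 1/c \<le> \<epsilon>/2"
  proof -
    have "\<forall>\<^sub>F c in at_top. c \<ge> max 1 (2/\<epsilon>)" by (rule eventually_ge_at_top)
    then show ?thesis
    proof eventually_elim
      case (elim c)
      then have c0: "c > 0" by auto
      have "2/\<epsilon> \<le> c" using elim by auto
      then have "2 \<le> c * \<epsilon>" using eps by (simp add: divide_le_eq)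
      then have "1/c \<le> \<epsilon>/2" using c0 eps by (simp add: divide_le_eq field_simps)
      then show ?case using c0 by simp
    qed
  qed
  have ev2: "\<forall>\<^sub>F c in at_top. M2/2 * (1/c)^2 \<le> 1/2"
  proof -
    have "((\<lambda>c::real. M2/2 * (1/c)^2) \<longlongrightarrow> 0) at_top" by real_asymp
    then have "\<forall>\<^sub>F c in at_top. M2/2 * (1/c)^2 < 1/2" by (rule order_tendstoD(2)) simp
    then show ?thesis by eventually_elim simp
  qed
  have ev3: "\<forall>\<^sub>F c in at_top. \<beta>*m*c^2/2 \<ge> \<Gamma>"
  proof -
    have "filterlim (\<lambda>c::real. \<beta>*m*c^2/2) at_top at_top" using \<beta> m by real_asymp
    then show ?thesis by (simp add: filterlim_at_top)
  qed
  obtain c0 where c0: "\<And>c. c \<ge> c0 \<Longrightarrow> (c > 0 \<and> 1/c \<le> \<epsilon>/2) \<and> M2/2 * (1/c)^2 \<le> 1/2 \<and> \<beta>*m*c^2/2 \<ge> \<Gamma>"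
    using eventually_conj[OF ev1 eventually_conj[OF ev2 ev3]] by (auto simp: eventually_at_top_linorder)
  have ahalf: "\<alpha> (1/c) x \<ge> 1/2" if "c \<ge> c0" "x \<in> K" for c x
  proof -
    have "\<bar>\<alpha> (1/c) x - 1\<bar> \<le> M2/2 * (1/c)^2" using c0[OF that(1)] that(2) by (intro abound) auto
    moreover have "- (\<alpha> (1/c) x - 1) \<le> \<bar>\<alpha> (1/c) x - 1\<bar>" by (rule abs_ge_minus_self)
    moreover have "M2/2 * (1/c)^2 \<le> 1/2" using c0[OF that(1)] by blast
    ultimately show ?thesis by linarith
  qed
  have gam: "gamma_rel \<alpha> \<beta> m c x = (\<alpha> (1/c) x * \<beta> * m) * c^2" for c x
    by (simp add: gamma_rel_def)
  have gamge: "gamma_rel \<alpha> \<beta> m c x \<ge> \<Gamma>" if "c \<ge> c0" "x \<in> K" for c x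
  proof -
    have "\<beta>*m*c^2/2 \<le> (\<alpha> (1/c) x * \<beta> * m) * c^2"
    proof -
      have "\<beta>*m*c^2/2 = (1/2) * (\<beta> * m * c^2)" by simp
      also have "\<dots> \<le> \<alpha> (1/c) x * (\<beta> * m * c^2)"
        using ahalf[OF that] \<beta> m by (intro mult_right_mono) auto
      finally show ?thesis by (simp add: algebra_simps)
    qed
    then show ?thesis using c0[OF that(1)] gam by (metis order_trans)
  qed
  define C1 where "C1 = 4*pi*m^3 * sqrt 2 * exp(\<beta>*\<mu>)/(2*pi*hb)^3"
  have C1pos: "C1 > 0" using m hb by (simp add: C1_def)
  define a where "a c x = \<alpha> (1/c) x" for c x
  define R where "R c x = C1 * exp (\<beta>*m*(c^2*(1 - a c x))) / (a c x*\<beta>*m * sqrt (a c x*\<beta>*m)) * G (gamma_rel \<alpha> \<beta> m c x)" for c x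
  have wform: "w_rel \<alpha> \<beta> m \<mu> hb c x = R c x" if "c \<ge> c0" "x \<in> K" for c x
  proof -
    have cpos: "c > 0" using c0[OF that(1)] by simp
    define k where "k = a c x * \<beta> * m"
    have kpos: "k > 0" using ahalf[OF that] \<beta> m by (simp add: k_def a_def)
    define g where "g = gamma_rel \<alpha> \<beta> m c x"
    have gk: "g = k * c^2" by (simp add: g_def k_def a_def gam)
    have g1: "g \<ge> 1" using gamge[OF that] \<Gamma>1 by (simp add: g_def)
    have sq: "sqrt (2/g) = sqrt 2 / (sqrt k * c)"
      using cpos kpos by (simp add: gk real_sqrt_divide real_sqrt_mult)
    have ex: "exp (\<beta> * (m * c\<^sup>2 + \<mu>)) * exp (- g) = exp (\<beta>*\<mu>) * exp (\<beta>*m*(c^2*(1 - a c x)))"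
      by (simp add: exp_add[symmetric] gk k_def algebra_simps)
    have "w_rel \<alpha> \<beta> m \<mu> hb c x = z_rel m \<beta> \<mu> hb c * besselK 2 g / g"
      by (simp add: w_rel_def g_def)
    also have "\<dots> = 4 * pi * (m * c) ^ 3 / (2 * pi * hb) ^ 3 * (exp (\<beta> * (m * c\<^sup>2 + \<mu>)) * exp (- g)) * (sqrt 2 / (sqrt k * c)) * G g / (k * c^2)"
      unfolding besselK_Hb[OF g1] sq[symmetric] by (simp add: z_rel_def G_def gk[symmetric])
    also have "\<dots> = R c x"
      unfolding ex R_def C1_def k_def[symmetric] g_def[symmetric] using cpos kpos
      by (simp add: field_simps power3_eq_cube power2_eq_square)
    finally show ?thesis .
  qed
  have Sopen: "open ?S" using V(1) by (intro open_Times) auto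
  have xK_V: "x \<in> V" if "x \<in> K" for x using KV that by auto
  have lim_a: "((\<lambda>c. a c x) \<longlongrightarrow> 1) at_top" if x: "x \<in> K" for x
  proof -
    have "((\<lambda>c. a c x - 1) \<longlongrightarrow> 0) at_top"
    proof (rule Lim_null_comparison[where g="\<lambda>c. M2/2 * (1/c)^2"])
      show "\<forall>\<^sub>F c in at_top. norm (a c x - 1) \<le> M2/2 * (1/c)^2"
        using eventually_ge_at_top[of c0]
      proof eventually_elim
        case (elim c)
        have "\<bar>\<alpha> (1/c) x - 1\<bar> \<le> M2/2 * (1/c)^2" using c0[OF elim] x by (intro abound) auto
        then show ?case by (simp add: a_def)
      qed
      show "((\<lambda>c::real. M2/2 * (1/c)^2) \<longlongrightarrow> 0) at_top" by real_asymp
    qed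
    then have "((\<lambda>c. a c x - 1 + 1) \<longlongrightarrow> 0 + 1) at_top" by (intro tendsto_add tendsto_const)
    then show ?thesis by simp
  qed
  have lim_b: "((\<lambda>c. c^2 * (1 - a c x)) \<longlongrightarrow> - g2 (0, x) / 2) at_top" if x: "x \<in> K" for x
  proof -
    define t where "t c = (SOME t. 0 < t \<and> t < 1/c \<and> \<alpha> (1/c) x = 1 + g2 (t, x) / 2 * (1/c)^2)" for c
    have tp: "0 < t c \<and> t c < 1/c \<and> \<alpha> (1/c) x = 1 + g2 (t c, x) / 2 * (1/c)^2" if "c \<ge> c0" for c
    proof -
      have "\<exists>t. 0 < t \<and> t < 1/c \<and> \<alpha> (1/c) x = 1 + g2 (t, x) / 2 * (1/c)^2"
        using c0[OF that] by (intro Tay x) auto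
      then show ?thesis unfolding t_def by (rule someI_ex)
    qed
    have t0: "(t \<longlongrightarrow> 0) at_top"
    proof (rule Lim_null_comparison[where g="\<lambda>c. 1/c"])
      show "\<forall>\<^sub>F c in at_top. norm (t c) \<le> 1/c"
        using eventually_ge_at_top[of c0] by eventually_elim (use tp in force)
      show "((\<lambda>c::real. 1/c) \<longlongrightarrow> 0) at_top" by real_asymp
    qed
    have cont: "isCont g2 (0, x)"
      using cg2 Sopen eps xK_V[OF x] continuous_on_eq_continuous_at by fastforce
    have "((\<lambda>c. g2 (t c, x)) \<longlongrightarrow> g2 (0, x)) at_top"
      by (rule isCont_tendsto_compose[OF cont]) (intro tendsto_Pair t0 tendsto_const)
    then have 1: "((\<lambda>c. - g2 (t c, x) / 2) \<longlongrightarrow> - g2 (0, x) / 2) at_top"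
      by (intro tendsto_divide tendsto_minus tendsto_const) auto
    have "\<forall>\<^sub>F c in at_top. - g2 (t c, x) / 2 = c^2 * (1 - a c x)"
      using eventually_ge_at_top[of c0]
    proof eventually_elim
      case (elim c)
      have cp: "c > 0" using c0[OF elim] by simp
      have "a c x = 1 + g2 (t c, x) / 2 * (1/c)^2" using tp[OF elim] by (simp add: a_def)
      then show ?case using cp by (simp add: field_simps power2_eq_square)
    qed
    with 1 show ?thesis by (rule Lim_transform_eventually)
  qed
  have lim_g: "filterlim (\<lambda>c. gamma_rel \<alpha> \<beta> m c x) at_top at_top" if x: "x \<in> K" for x
  proof -
    have "((\<lambda>c. a c x * \<beta> * m) \<longlongrightarrow> 1 * \<beta> * m) at_top"
      by (intro tendsto_mult lim_a[OF x] tendsto_const)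
    then have t: "((\<lambda>c. a c x * \<beta> * m) \<longlongrightarrow> \<beta> * m) at_top" by simp
    have f2: "filterlim (\<lambda>c::real. c^2) at_top at_top" by real_asymp
    have "filterlim (\<lambda>c. (a c x * \<beta> * m) * c^2) at_top at_top"
      by (rule filterlim_tendsto_pos_mult_at_top[OF t _ f2]) (use \<beta> m in simp)
    then show ?thesis by (simp add: gam a_def)
  qed
  have lim_R: "((\<lambda>c. R c x) \<longlongrightarrow> w_newt \<alpha> \<beta> m \<mu> hb x) at_top" if x: "x \<in> K" for x
  proof -
    have G: "((\<lambda>c. G (gamma_rel \<alpha> \<beta> m c x)) \<longlongrightarrow> sqrt pi / 2) at_top"
      unfolding G_def by (rule filterlim_compose[OF Hb_int_lim lim_g[OF x]])
    have k: "((\<lambda>c. a c x * \<beta> * m * sqrt (a c x * \<beta> * m)) \<longlongrightarrow> 1 * \<beta> * m * sqrt (1 * \<beta> * m)) at_top"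
      by (intro tendsto_mult tendsto_real_sqrt lim_a[OF x] tendsto_const)
    have "((\<lambda>c. R c x) \<longlongrightarrow> C1 * exp (\<beta>*m*(- g2 (0, x) / 2)) / (1 * \<beta> * m * sqrt (1 * \<beta> * m)) * (sqrt pi / 2)) at_top"
      unfolding R_def using \<beta> m
      by (intro tendsto_mult tendsto_divide tendsto_exp k G lim_b[OF x] tendsto_const) auto
    moreover have "C1 * exp (\<beta>*m*(- g2 (0, x) / 2)) / (1 * \<beta> * m * sqrt (1 * \<beta> * m)) * (sqrt pi / 2)
        = w_newt \<alpha> \<beta> m \<mu> hb x"
    proof -
      have "C1 * exp (\<beta>*m*(- g2 (0, x) / 2)) / (1 * \<beta> * m * sqrt (1 * \<beta> * m)) * (sqrt pi / 2)
          = (C1 / (\<beta>*m * sqrt(\<beta>*m)) * (sqrt pi / 2)) * exp (- (1 / 2) * \<beta> * m * g2 (0, x))"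
        by (simp add: field_simps)
      also have "\<dots> = w_newt \<alpha> \<beta> m \<mu> hb x"
        unfolding w_newt_def alpha2_eq[OF xK_V[OF x]] C1_def using const_id[OF hb \<beta> m, of \<mu>] by simp
      finally show ?thesis .
    qed
    ultimately show ?thesis by simp
  qed
  have lim_w: "((\<lambda>c. w_rel \<alpha> \<beta> m \<mu> hb c x) \<longlongrightarrow> w_newt \<alpha> \<beta> m \<mu> hb x) at_top" if x: "x \<in> K" for x
  proof (rule Lim_transform_eventually[OF lim_R[OF x]])
    show "\<forall>\<^sub>F c in at_top. R c x = w_rel \<alpha> \<beta> m \<mu> hb c x"
      using eventually_ge_at_top[of c0] by eventually_elim (simp add: wform x)
  qed
  define Bw where "Bw = C1 * exp (\<beta>*m*(M2/2)) / (\<beta>*m/2 * sqrt (\<beta>*m/2)) * 2"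
  have Rb: "0 < R c x \<and> R c x \<le> Bw" if c: "c \<ge> c0" and x: "x \<in> K" for c x
  proof -
    have cp: "c > 0" using c0[OF c] by simp
    define A where "A = a c x"
    have A2: "A \<ge> 1/2" using ahalf[OF c x] by (simp add: A_def a_def)
    have "\<bar>\<alpha> (1/c) x - 1\<bar> \<le> M2/2 * (1/c)^2" using c0[OF c] x by (intro abound) auto
    then have "\<bar>A - 1\<bar> \<le> M2/2 * (1/c)^2" by (simp add: A_def a_def)
    then have "c^2 * \<bar>A - 1\<bar> \<le> c^2 * (M2/2 * (1/c)^2)" by (intro mult_left_mono) auto
    also have "\<dots> = M2/2" using cp by (simp add: field_simps)
    finally have "c^2 * (1 - A) \<le> M2/2" by (smt (verit) mult_left_mono zero_le_power2 abs_ge_self abs_minus_commute)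
    then have "\<beta>*m*(c^2*(1 - A)) \<le> \<beta>*m*(M2/2)"
      by (rule mult_left_mono) (use \<beta> m in simp)
    then have E: "exp (\<beta>*m*(c^2*(1 - A))) \<le> exp (\<beta>*m*(M2/2))" by simp
    have D1: "\<beta>*m/2 \<le> A*\<beta>*m" using A2 \<beta> m by (simp add: mult_right_mono)
    have D: "\<beta>*m/2 * sqrt (\<beta>*m/2) \<le> A*\<beta>*m * sqrt (A*\<beta>*m)"
      using D1 \<beta> m by (intro mult_mono real_sqrt_le_mono) auto
    have Dp: "0 < \<beta>*m/2 * sqrt (\<beta>*m/2)" using \<beta> m by simp
    have gg: "gamma_rel \<alpha> \<beta> m c x \<ge> \<Gamma>" by (rule gamge[OF c x])
    have Gp: "0 < G (gamma_rel \<alpha> \<beta> m c x)" "G (gamma_rel \<alpha> \<beta> m c x) \<le> 2"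
      using Gpos[OF gg] Gle[OF gg] by auto
    have "C1 * exp (\<beta>*m*(c^2*(1 - A))) / (A*\<beta>*m * sqrt (A*\<beta>*m)) \<le> C1 * exp (\<beta>*m*(M2/2)) / (\<beta>*m/2 * sqrt (\<beta>*m/2))"
      using E D Dp C1pos by (intro frac_le mult_left_mono) auto
    moreover have "0 < C1 * exp (\<beta>*m*(c^2*(1 - A))) / (A*\<beta>*m * sqrt (A*\<beta>*m))"
      using C1pos A2 \<beta> m by simp
    ultimately have "R c x \<le> Bw"
      unfolding R_def Bw_def A_def[symmetric] using Gp by (intro mult_mono) auto
    moreover have "0 < R c x"
      unfolding R_def A_def[symmetric] using Gp C1pos A2 \<beta> m by simp
    ultimately show ?thesis by simp
  qed
  have znp: "z_newt m \<beta> \<mu> hb > 0" using m \<beta> hb by (simp add: z_newt_def)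
  define Bn where "Bn = z_newt m \<beta> \<mu> hb * exp (\<beta>*m*M2/2)"
  have Nb: "0 < w_newt \<alpha> \<beta> m \<mu> hb x \<and> w_newt \<alpha> \<beta> m \<mu> hb x \<le> Bn" if x: "x \<in> K" for x
  proof -
    have "(0, x) \<in> Kc2" using x eps by (simp add: Kc2_def)
    then have "\<bar>g2 (0, x)\<bar> \<le> M2" by (rule M2)
    then have h: "- g2 (0,x) \<le> M2" using abs_ge_minus_self[of "g2 (0,x)"] by linarith
    have "\<beta>*m*(- g2 (0,x)) \<le> \<beta>*m*M2" by (rule mult_left_mono[OF h]) (use \<beta> m in simp)
    moreover have "- (1/2) * \<beta> * m * g2 (0, x) = (\<beta>*m*(- g2 (0,x)))/2" by simp
    ultimately have "- (1/2) * \<beta> * m * g2 (0, x) \<le> \<beta>*m*M2/2" by linarith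
    then show ?thesis unfolding w_newt_def Bn_def alpha2_eq[OF xK_V[OF x]] using znp by simp
  qed
  have ca: "continuous_on V (\<lambda>x. \<alpha> y x)" if "\<bar>y\<bar> < \<epsilon>" for y
  proof -
    have "continuous_on V (\<lambda>x. (\<lambda>p. \<alpha> (fst p) (snd p)) (y, x))"
      by (rule continuous_on_compose2[OF calpha]) (use that in \<open>auto intro!: continuous_intros\<close>)
    then show ?thesis by simp
  qed
  have cg20: "continuous_on V (\<lambda>x. g2 (0, x))"
    by (rule continuous_on_compose2[OF cg2]) (use eps in \<open>auto intro!: continuous_intros\<close>)
  have LV: "\<Lambda> \<subseteq> V" using LK KV by auto
  have W0m: "w_newt \<alpha> \<beta> m \<mu> hb \<in> borel_measurable (leb_on \<Lambda>)"
  proof -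
    have "(\<lambda>x. z_newt m \<beta> \<mu> hb * exp (- (1 / 2) * \<beta> * m * g2 (0, x))) \<in> borel_measurable (leb_on \<Lambda>)"
      by (intro cont_meas_leb continuous_intros continuous_on_subset[OF cg20 LV])
    moreover have "\<And>x. x \<in> space (leb_on \<Lambda>) \<Longrightarrow> z_newt m \<beta> \<mu> hb * exp (- (1 / 2) * \<beta> * m * g2 (0, x)) = w_newt \<alpha> \<beta> m \<mu> hb x"
      using \<Lambda>_borel LV by (auto simp: w_newt_def alpha2_eq space_restrict_space)
    ultimately show ?thesis using measurable_cong by (metis (no_types, lifting))
  qed
  define Kf where "Kf g = exp (- g) * sqrt (2/g) * G g" for g
  have Kfm: "Kf \<in> borel_measurable borel"
    unfolding Kf_def G_def using Hb_int_meas by measurable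
  have Wcm: "w_rel \<alpha> \<beta> m \<mu> hb c \<in> borel_measurable (leb_on \<Lambda>)" if c: "c \<ge> c0" for c
  proof -
    have "\<bar>1/c\<bar> < \<epsilon>" using c0[OF c] eps by auto
    then have cgam: "continuous_on \<Lambda> (\<lambda>x. gamma_rel \<alpha> \<beta> m c x)"
      unfolding gamma_rel_def by (intro continuous_intros continuous_on_subset[OF ca LV])
    have gm: "(\<lambda>x. gamma_rel \<alpha> \<beta> m c x) \<in> borel_measurable (leb_on \<Lambda>)" by (rule cont_meas_leb[OF cgam])
    have "(\<lambda>x. z_rel m \<beta> \<mu> hb c * Kf (gamma_rel \<alpha> \<beta> m c x) / gamma_rel \<alpha> \<beta> m c x) \<in> borel_measurable (leb_on \<Lambda>)"
      using measurable_compose[OF gm Kfm] gm by measurable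
    moreover have "\<And>x. x \<in> space (leb_on \<Lambda>) \<Longrightarrow> z_rel m \<beta> \<mu> hb c * Kf (gamma_rel \<alpha> \<beta> m c x) / gamma_rel \<alpha> \<beta> m c x = w_rel \<alpha> \<beta> m \<mu> hb c x"
    proof -
      fix x assume "x \<in> space (leb_on \<Lambda>)"
      then have x: "x \<in> K" using \<Lambda>_borel LK by (auto simp: space_restrict_space)
      have "gamma_rel \<alpha> \<beta> m c x \<ge> 1" using gamge[OF c x] \<Gamma>1 by simp
      then show "z_rel m \<beta> \<mu> hb c * Kf (gamma_rel \<alpha> \<beta> m c x) / gamma_rel \<alpha> \<beta> m c x = w_rel \<alpha> \<beta> m \<mu> hb c x"
        by (simp add: w_rel_def Kf_def G_def besselK_Hb)
    qed
    ultimately show ?thesis using measurable_cong by (metis (no_types, lifting))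
  qed
  define W where "W c = (if c \<ge> c0 then w_rel \<alpha> \<beta> m \<mu> hb c else w_newt \<alpha> \<beta> m \<mu> hb)" for c
  define B where "B = max Bw Bn"
  have Lf: "emeasure lborel \<Lambda> < \<infinity>"
    by (rule emeasure_bounded_finite[OF bounded_subset[OF compact_imp_bounded[OF \<Lambda>_cpt] closure_subset]])
  have Wbp: "\<bar>W c x\<bar> \<le> B \<and> W c x > 0" if "x \<in> \<Lambda>" for c x
    proof -
      have xK: "x \<in> K" using that LK by auto
      show ?thesis
      proof (cases "c \<ge> c0")
        case True
        then have "W c x = R c x" by (simp add: W_def wform[OF True xK])
        then show ?thesis using Rb[OF True xK] by (simp add: B_def le_max_iff_disj)
      next
        case False
        then have "W c x = w_newt \<alpha> \<beta> m \<mu> hb x" by (simp add: W_def)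
        then show ?thesis using Nb[OF xK] by (simp add: B_def le_max_iff_disj)
      qed
    qed
  interpret ws: wsetup \<Lambda> W "w_newt \<alpha> \<beta> m \<mu> hb" B
  proof
    show "\<Lambda> \<in> sets borel" by (rule \<Lambda>_borel)
    show "emeasure lborel \<Lambda> < \<infinity>" by (rule Lf)
    show "W c \<in> borel_measurable (leb_on \<Lambda>)" for c by (simp add: W_def Wcm W0m)
    show "w_newt \<alpha> \<beta> m \<mu> hb \<in> borel_measurable (leb_on \<Lambda>)" by (rule W0m)
    have "0 < Bn" using znp by (simp add: Bn_def)
    then show "0 \<le> B" by (simp add: B_def le_max_iff_disj)
    show "\<bar>W c x\<bar> \<le> B" if "x \<in> \<Lambda>" for c x using Wbp[OF that] by blast
    show "W c x > 0" if "x \<in> \<Lambda>" for c x using Wbp[OF that] by blast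
    show "w_newt \<alpha> \<beta> m \<mu> hb x > 0" if "x \<in> \<Lambda>" for x
      using that LK Nb[of x] by auto
    show "((\<lambda>c. W c x) \<longlongrightarrow> w_newt \<alpha> \<beta> m \<mu> hb x) at_top" if "x \<in> \<Lambda>" for x
    proof (rule Lim_transform_eventually[OF lim_w])
      show "x \<in> K" using that LK by auto
      show "\<forall>\<^sub>F c in at_top. w_rel \<alpha> \<beta> m \<mu> hb c x = W c x"
        using eventually_ge_at_top[of c0] by eventually_elim (simp add: W_def)
    qed
  qed
  have evW: "\<forall>\<^sub>F c in at_top. W c = w_rel \<alpha> \<beta> m \<mu> hb c"
    using eventually_ge_at_top[of c0] by eventually_elim (simp add: W_def)
  have P1: "((\<lambda>c. partition_fun \<Lambda> (w_rel \<alpha> \<beta> m \<mu> hb c)) \<longlongrightarrow> partition_fun \<Lambda> (w_newt \<alpha> \<beta> m \<mu> hb)) at_top"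
  proof (rule Lim_transform_eventually[OF ws.pf_lim])
    show "\<forall>\<^sub>F c in at_top. partition_fun \<Lambda> (W c) = partition_fun \<Lambda> (w_rel \<alpha> \<beta> m \<mu> hb c)"
      using evW by eventually_elim simp
  qed
  have P2: "partition_fun \<Lambda> (w_newt \<alpha> \<beta> m \<mu> hb)
            = exp (z_newt m \<beta> \<mu> hb * integral\<^sup>L (leb_on \<Lambda>) (\<lambda>x. exp (- (1 / 2) * \<beta> * m * alpha2 \<alpha> x)))"
  proof -
    have "w_newt \<alpha> \<beta> m \<mu> hb = (\<lambda>x. z_newt m \<beta> \<mu> hb * exp (- (1 / 2) * \<beta> * m * alpha2 \<alpha> x))"
      by (simp add: w_newt_def[abs_def])
    then show ?thesis by (simp add: pf_exp)
  qed
  have P3: "\<forall>A \<in> cyl_sigma X \<Lambda>. \<forall>s \<in> configs X.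
            ((\<lambda>c. spec X \<Lambda> (w_rel \<alpha> \<beta> m \<mu> hb c) A s)
               \<longlongrightarrow> spec X \<Lambda> (w_newt \<alpha> \<beta> m \<mu> hb) A s) at_top"
  proof (intro ballI)
    fix A s
    show "((\<lambda>c. spec X \<Lambda> (w_rel \<alpha> \<beta> m \<mu> hb c) A s) \<longlongrightarrow> spec X \<Lambda> (w_newt \<alpha> \<beta> m \<mu> hb) A s) at_top"
    proof (rule Lim_transform_eventually[OF ws.spec_lim])
      show "\<forall>\<^sub>F c in at_top. spec X \<Lambda> (W c) A s = spec X \<Lambda> (w_rel \<alpha> \<beta> m \<mu> hb c) A s"
        using evW by eventually_elim simp
    qed
  qed
  show ?thesis using P1 P2 P3 by blast
qed

end
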